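(* Assume that $\Omega$ is open. The real $^*$-algebra $\mathcal{SR}(\Omega)$ of slice regular functions on $\Omega$ is nonsingular (i.e., $N(f)\equiv0$ implies $f\equiv0$ for $f\in\mathcal{SR}(\Omega)$) if and only if $A$ is nonsingular and $\Omega$ is a union of slice domains.
   Context: Let $A$ be a finite-dimensional real algebra with unit $1$ ($\mathbb{R}$ identified with $\mathbb{R}1$) which is alternative (the associator $(x,y,z)=(xy)z-x(yz)$ is alternating), with a $^*$-involution $x\mapsto x^c$ (real linear, $(x^c)^c=x$, $(xy)^c=y^cx^c$, $r^c=r$ for $r\in\mathbb{R}$). Let $t(x)=x+x^c$, $n(x)=xx^c$; $A$ is nonsingular if $n(x)=0$ implies $x=0$. Let $\mathbb{S}_A=\{J\in A:t(J)=0,n(J)=1\}$ (assumed non-empty), $Q_A=\mathbb{R}\cup\{x:t(x),n(x)\in\mathbb{R},4n(x)>t(x)^2\}$; every $x\in Q_A$ is $\alpha+\beta J$ with $\alpha,\beta\in\mathbb{R}$, $J\in\mathbb{S}_A$. For $E\subseteq\mathbb{C}$ invariant under conjugation let $\Omega_E=\{\alpha+\beta J:\alpha+i\beta\in E,J\in\mathbb{S}_A\}$; here $\Omega=\Omega_D$ with $D$ open non-empty and conjugation-invariant. $\Omega_E$ is a slice domain if $E$ is open, connected and meets $\mathbb{R}$. $A_{\mathbb{C}}=\{a+\imath b\}$ with $(a+\imath b)(a'+\imath b')=aa'-bb'+\imath(ab'+ba')$, $\overline{a+\imath b}=a-\imath b$, $(a+\imath b)^c=a^c+\imath b^c$. A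 stem function $F=F_1+\imath F_2:D\to A_{\mathbb{C}}$ satisfies $F(\bar z)=\overline{F(z)}$ and induces $f=\mathcal{I}(F)$, $f(\alpha+\beta J)=F_1(\alpha+i\beta)+JF_2(\alpha+i\beta)$; $f$ is slice regular if $F$ is $\mathscr{C}^1$ and $\frac12\big(\frac{\partial F}{\partial\alpha}+\imath\frac{\partial F}{\partial\beta}\big)\equiv0$. $\mathcal{SR}(\Omega)$ is a $^*$-algebra with pointwise sum, slice product $f\cdot g=\mathcal{I}(FG)$, conjugation $f^c=\mathcal{I}(F^c)$ ($F^c(z)=F(z)^c$), and norm $N(f)=f\cdot f^c$. *)

theory Defs
  imports "HOL-Analysis.Analysis"
begin

text \<open>The algebra A is a finite-dimensional real vector space (a type of class
euclidean_space) equipped with a (not necessarily associative) multiplication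
and unit (syntactic classes times and one) and a real linear map cj,
the *-involution x to x^c. The reals are identified with the multiples r *R 1.\<close>

definition associator :: "'a::{real_vector,times} \<Rightarrow> 'a \<Rightarrow> 'a \<Rightarrow> 'a" where
  "associator x y z = (x * y) * z - x * (y * z)"

definition alt_star_algebra :: "('a::{euclidean_space,times,one} \<Rightarrow> 'a) \<Rightarrow> bool" where
  "alt_star_algebra cj \<longleftrightarrow>
     bilinear ((*) :: 'a \<Rightarrow> 'a \<Rightarrow> 'a) \<and>
     (1::'a) \<noteq> 0 \<and>
     (\<forall>x::'a. 1 * x = x \<and> x * 1 = x) \<and>
     (\<forall>x y::'a. associator x x y = 0 \<and> associator x y x = 0 \<and> associator y x x = 0) \<and>
     linear cj \<and>
     (\<forall>x. cj (cj x) = x) \<and>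
     (\<forall>x y. cj (x * y) = cj y * cj x) \<and>
     (\<forall>r::real. cj (r *\<^sub>R 1) = r *\<^sub>R 1)"

definition trace_A :: "('a::{euclidean_space,times,one} \<Rightarrow> 'a) \<Rightarrow> 'a \<Rightarrow> 'a" where
  "trace_A cj x = x + cj x"

definition norm_A :: "('a::{euclidean_space,times,one} \<Rightarrow> 'a) \<Rightarrow> 'a \<Rightarrow> 'a" where
  "norm_A cj x = x * cj x"

definition nonsingular_alg :: "('a::{euclidean_space,times,one} \<Rightarrow> 'a) \<Rightarrow> bool" where
  "nonsingular_alg cj \<longleftrightarrow> (\<forall>x. norm_A cj x = 0 \<longrightarrow> x = 0)"

definition sphere_A :: "('a::{euclidean_space,times,one} \<Rightarrow> 'a) \<Rightarrow> 'a set" where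
  "sphere_A cj = {J. trace_A cj J = 0 \<and> norm_A cj J = 1}"

definition Omega :: "('a::{euclidean_space,times,one} \<Rightarrow> 'a) \<Rightarrow> complex set \<Rightarrow> 'a set" where
  "Omega cj E = {\<alpha> *\<^sub>R 1 + \<beta> *\<^sub>R J | \<alpha> \<beta> J. Complex \<alpha> \<beta> \<in> E \<and> J \<in> sphere_A cj}"

definition slice_domain :: "('a::{euclidean_space,times,one} \<Rightarrow> 'a) \<Rightarrow> 'a set \<Rightarrow> bool" where
  "slice_domain cj U \<longleftrightarrow>
     (\<exists>E. open E \<and> connected E \<and> E \<inter> \<real> \<noteq> {} \<and> (\<forall>z\<in>E. cnj z \<in> E) \<and> U = Omega cj E)"

text \<open>The complexification A_C = A + i A is represented by pairs (a, b) = a + i b.\<close>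
definition cmult :: "'a::{real_vector,times} \<times> 'a \<Rightarrow> 'a \<times> 'a \<Rightarrow> 'a \<times> 'a" where
  "cmult p q = (fst p * fst q - snd p * snd q, fst p * snd q + snd p * fst q)"

definition imult :: "'a::real_vector \<times> 'a \<Rightarrow> 'a \<times> 'a" where
  "imult p = (- snd p, fst p)"

definition stem :: "complex set \<Rightarrow> (complex \<Rightarrow> 'a::real_vector \<times> 'a) \<Rightarrow> bool" where
  "stem D F \<longleftrightarrow> (\<forall>z\<in>D. F (cnj z) = (fst (F z), - snd (F z)))"

text \<open>F is of class C^1 on D (viewing C = R^2): differentiable with continuous
partial derivatives d/d alpha (direction 1) and d/d beta (direction i).\<close>
definition C1_on :: "complex set \<Rightarrow> (complex \<Rightarrow> 'a::real_normed_vector) \<Rightarrow> bool" where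
  "C1_on D F \<longleftrightarrow> (\<forall>z\<in>D. F differentiable (at z)) \<and>
     continuous_on D (\<lambda>z. frechet_derivative F (at z) 1) \<and>
     continuous_on D (\<lambda>z. frechet_derivative F (at z) \<i>)"

definition slice_regular_stem :: "complex set \<Rightarrow> (complex \<Rightarrow> 'a::real_normed_vector \<times> 'a) \<Rightarrow> bool" where
  "slice_regular_stem D F \<longleftrightarrow> stem D F \<and> C1_on D F \<and>
     (\<forall>z\<in>D. frechet_derivative F (at z) 1 + imult (frechet_derivative F (at z) \<i>) = 0)"

definition induced :: "('a::{euclidean_space,times,one} \<Rightarrow> 'a) \<Rightarrow> complex set \<Rightarrow> (complex \<Rightarrow> 'a \<times> 'a) \<Rightarrow> 'a \<Rightarrow> 'a" where
  "induced cj D F x = (SOME y. \<exists>\<alpha> \<beta> J. J \<in> sphere_A cj \<and> Complex \<alpha> \<beta> \<in> D \<and>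
      x = \<alpha> *\<^sub>R 1 + \<beta> *\<^sub>R J \<and> y = fst (F (Complex \<alpha> \<beta>)) + J * snd (F (Complex \<alpha> \<beta>)))"

definition stem_prod :: "(complex \<Rightarrow> 'a::{real_vector,times} \<times> 'a) \<Rightarrow> (complex \<Rightarrow> 'a \<times> 'a) \<Rightarrow> complex \<Rightarrow> 'a \<times> 'a" where
  "stem_prod F G z = cmult (F z) (G z)"

definition stem_conj :: "('a \<Rightarrow> 'a) \<Rightarrow> (complex \<Rightarrow> 'a \<times> 'a) \<Rightarrow> complex \<Rightarrow> 'a \<times> 'a" where
  "stem_conj cj F z = (cj (fst (F z)), cj (snd (F z)))"

text \<open>SR(Omega_D) consists of the functions I(F), F a slice regular stem function on D;
N(I(F)) = I(F F^c). Nonsingularity of SR(Omega_D): N(f) = 0 on Omega_D implies f = 0 on Omega_D.\<close>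
definition SR :: "('a::{euclidean_space,times,one} \<Rightarrow> 'a) \<Rightarrow> complex set \<Rightarrow> ('a \<Rightarrow> 'a) set" where
  "SR cj D = {f. \<exists>F. slice_regular_stem D F \<and> (\<forall>x\<in>Omega cj D. f x = induced cj D F x)}"

definition SR_nonsingular :: "('a::{euclidean_space,times,one} \<Rightarrow> 'a) \<Rightarrow> complex set \<Rightarrow> bool" where
  "SR_nonsingular cj D \<longleftrightarrow>
     (\<forall>F. slice_regular_stem D F \<longrightarrow>
        (\<forall>x\<in>Omega cj D. induced cj D (stem_prod F (stem_conj cj F)) x = 0) \<longrightarrow>
        (\<forall>x\<in>Omega cj D. induced cj D F x = 0))"

end

theory Submission
  imports Defs "HOL-Complex_Analysis.Complex_Analysis"
begin

locale alg =
  fixes cj :: "'a::{euclidean_space,times,one} \<Rightarrow> 'a"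
  assumes A: "alt_star_algebra cj"
begin

lemma bil: "bilinear ((*) :: 'a \<Rightarrow> 'a \<Rightarrow> 'a)"
  using A by (simp add: alt_star_algebra_def)

lemma m0l[simp]: "(0::'a) * x = 0" using bilinear_lzero[OF bil] .
lemma m0r[simp]: "(x::'a) * 0 = 0" using bilinear_rzero[OF bil] .
lemma msl[simp]: "(c *\<^sub>R (x::'a)) * y = c *\<^sub>R (x * y)" using bilinear_lmul[OF bil] .
lemma msr[simp]: "(x::'a) * (c *\<^sub>R y) = c *\<^sub>R (x * y)" using bilinear_rmul[OF bil] .
lemma mnl[simp]: "(- (x::'a)) * y = - (x * y)" using bilinear_lneg[OF bil] .
lemma mnr[simp]: "(x::'a) * (- y) = - (x * y)" using bilinear_rneg[OF bil] .
lemma m1l[simp]: "(1::'a) * x = x" using A by (simp add: alt_star_algebra_def)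
lemma m1r[simp]: "(x::'a) * 1 = x" using A by (simp add: alt_star_algebra_def)
lemma one_ne0[simp]: "(1::'a) \<noteq> 0" using A by (simp add: alt_star_algebra_def)

lemma lincj: "linear cj" using A by (simp add: alt_star_algebra_def)
lemma cj_scale[simp]: "cj (c *\<^sub>R x) = c *\<^sub>R cj x" using linear_scale[OF lincj] .
lemma cj_add[simp]: "cj (x + y) = cj x + cj y" using linear_add[OF lincj] .
lemma cj_neg[simp]: "cj (- x) = - cj x" using linear_neg[OF lincj] .
lemma cj_0[simp]: "cj 0 = 0" using linear_0[OF lincj] .
lemma cj_1[simp]: "cj 1 = 1"
  using A unfolding alt_star_algebra_def by (metis scaleR_one)

lemma sph_cj: "J \<in> sphere_A cj \<Longrightarrow> cj J = - J"
proof -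
  assume "J \<in> sphere_A cj"
  hence "J + cj J = 0" by (simp add: sphere_A_def trace_A_def)
  thus "cj J = - J" by (metis add.commute eq_neg_iff_add_eq_0)
qed

lemma sph_n: "J \<in> sphere_A cj \<Longrightarrow> J * cj J = 1"
  by (simp add: sphere_A_def norm_A_def)

lemma sph_sq: "J \<in> sphere_A cj \<Longrightarrow> J * J = - 1"
  using sph_n[of J] sph_cj[of J] by (metis minus_equation_iff mnr)

lemma rep:
  assumes J: "J \<in> sphere_A cj" and J': "J' \<in> sphere_A cj"
    and eq: "\<alpha> *\<^sub>R 1 + \<beta> *\<^sub>R J = \<alpha>' *\<^sub>R 1 + \<beta>' *\<^sub>R (J'::'a)"
  shows "\<alpha> = \<alpha>' \<and> \<beta> *\<^sub>R J = \<beta>' *\<^sub>R J' \<and> (\<beta> = \<beta>' \<or> \<beta> = - \<beta>')"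
proof -
  have tr: "x + cj x = (a + a) *\<^sub>R 1" if "x = a *\<^sub>R 1 + b *\<^sub>R K" "K \<in> sphere_A cj" for x a b K
    using that sph_cj[of K] apply (simp add: algebra_simps) by (metis mult_2_right scaleR_add_left)
  have "(\<alpha> + \<alpha>) *\<^sub>R (1::'a) = (\<alpha>' + \<alpha>') *\<^sub>R 1"
    using tr[OF refl J, of \<alpha> \<beta>] tr[OF refl J', of \<alpha>' \<beta>'] eq by simp
  hence "\<alpha> + \<alpha> = \<alpha>' + \<alpha>'" by (simp add: scaleR_cancel_right)
  hence a: "\<alpha> = \<alpha>'" by simp
  hence b: "\<beta> *\<^sub>R J = \<beta>' *\<^sub>R J'" using eq by simp
  have nn: "(b *\<^sub>R K) * cj (b *\<^sub>R K) = (b * b) *\<^sub>R 1" if "K \<in> sphere_A cj" for b K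
    using sph_n[OF that] by simp
  have "(\<beta> * \<beta>) *\<^sub>R (1::'a) = (\<beta>' * \<beta>') *\<^sub>R 1"
    using nn[OF J, of \<beta>] nn[OF J', of \<beta>'] b by simp
  hence "\<beta> * \<beta> = \<beta>' * \<beta>'" by (simp add: scaleR_cancel_right)
  hence "\<beta> = \<beta>' \<or> \<beta> = - \<beta>'" by (metis minus_mult_minus square_eq_iff)
  with a b show ?thesis by blast
qed

lemma mem_conj:
  assumes S: "\<forall>z\<in>S. cnj z \<in> S" and J: "J \<in> sphere_A cj" and J': "J' \<in> sphere_A cj"
    and eq: "\<alpha> *\<^sub>R 1 + \<beta> *\<^sub>R J = \<alpha>' *\<^sub>R 1 + \<beta>' *\<^sub>R (J'::'a)"
    and m: "Complex \<alpha>' \<beta>' \<in> S"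
  shows "Complex \<alpha> \<beta> \<in> S"
proof -
  from rep[OF J J' eq] have "\<alpha> = \<alpha>'" "\<beta> = \<beta>' \<or> \<beta> = - \<beta>'" by auto
  moreover have "cnj (Complex \<alpha>' \<beta>') = Complex \<alpha>' (- \<beta>')" by (simp add: complex_eq_iff)
  ultimately show ?thesis using S m by metis
qed

end

lemma induced_prop:
  assumes "x \<in> Omega cj D"
    and "\<And>\<alpha> \<beta> J. J \<in> sphere_A cj \<Longrightarrow> Complex \<alpha> \<beta> \<in> D \<Longrightarrow> x = \<alpha> *\<^sub>R 1 + \<beta> *\<^sub>R J \<Longrightarrow>
          P (fst (G (Complex \<alpha> \<beta>)) + J * snd (G (Complex \<alpha> \<beta>)))"
  shows "P (induced cj D G x)"
proof -
  from assms(1) obtain \<alpha> \<beta> J where "Complex \<alpha> \<beta> \<in> D" "J \<in> sphere_A cj" "x = \<alpha> *\<^sub>R 1 + \<beta> *\<^sub>R J"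
    by (auto simp: Omega_def)
  then have ex: "\<exists>y. \<exists>\<alpha> \<beta> J. J \<in> sphere_A cj \<and> Complex \<alpha> \<beta> \<in> D \<and>
      x = \<alpha> *\<^sub>R 1 + \<beta> *\<^sub>R J \<and> y = fst (G (Complex \<alpha> \<beta>)) + J * snd (G (Complex \<alpha> \<beta>))" by blast
  show ?thesis unfolding induced_def
    by (rule someI2_ex[OF ex]) (use assms(2) in blast)
qed

lemma Omega_mem: "Complex \<alpha> \<beta> \<in> D \<Longrightarrow> J \<in> sphere_A cj \<Longrightarrow> \<alpha> *\<^sub>R 1 + \<beta> *\<^sub>R J \<in> Omega cj D"
  by (auto simp: Omega_def)

lemma sr_lc:
  fixes F :: "complex \<Rightarrow> 'a::real_normed_vector \<times> 'a"
  assumes st: "stem D F" and lc: "\<forall>z\<in>D. \<exists>e>0. \<forall>w\<in>ball z e. F w = F z"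
  shows "slice_regular_stem D F"
proof -
  have d: "(F has_derivative (\<lambda>h. 0)) (at z)" if z: "z \<in> D" for z
  proof -
    obtain e where e: "e > 0" "\<forall>w\<in>ball z e. F w = F z" using lc z by blast
    have hd: "((\<lambda>w. F z) has_derivative (\<lambda>h. 0)) (at z)" by (rule has_derivative_const)
    have eq: "\<And>x. x \<in> ball z e \<Longrightarrow> (\<lambda>w. F z) x = F x" using e(2) by metis
    show ?thesis by (rule has_derivative_transform_within_open[OF hd open_ball _ eq])
      (rule centre_in_ball[THEN iffD2, OF e(1)])
  qed
  have fd: "frechet_derivative F (at z) = (\<lambda>h. 0)" if "z \<in> D" for z
    by (rule frechet_derivative_at[OF d[OF that], symmetric])
  have c: "continuous_on D (\<lambda>z. frechet_derivative F (at z) v)" for v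
    by (rule continuous_on_eq[OF continuous_on_const[of D 0]]) (simp add: fd)
  show ?thesis unfolding slice_regular_stem_def C1_on_def
  proof (intro conjI ballI)
    show "stem D F" by (rule st)
  next
    fix z assume "z \<in> D"
    thus "F differentiable at z" using d unfolding differentiable_def by blast
  next
    show "continuous_on D (\<lambda>z. frechet_derivative F (at z) 1)" by (rule c)
  next
    show "continuous_on D (\<lambda>z. frechet_derivative F (at z) \<i>)" by (rule c)
  next
    fix z assume "z \<in> D"
    hence "frechet_derivative F (at z) = (\<lambda>h. 0)" by (rule fd)
    thus "frechet_derivative F (at z) 1 + imult (frechet_derivative F (at z) \<i>) = 0"
      by (simp add: imult_def zero_prod_def)
  qed
qed

lemma holo:
  fixes F :: "complex \<Rightarrow> 'a::euclidean_space \<times> 'a"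
  assumes reg: "slice_regular_stem D F"
  shows "(\<lambda>z. Complex (fst (F z) \<bullet> b) (snd (F z) \<bullet> b)) holomorphic_on D"
proof -
  define L where "L = (\<lambda>p::'a \<times> 'a. Complex (fst p \<bullet> b) (snd p \<bullet> b))"
  have linL: "linear L" unfolding L_def
    by (rule linearI) (simp_all add: complex_eq_iff inner_add_left)
  have blL: "bounded_linear L" using linL by (simp add: linear_conv_bounded_linear)
  show ?thesis unfolding holomorphic_on_def
  proof
    fix z assume z: "z \<in> D"
    define F' where "F' = frechet_derivative F (at z)"
    have dF: "(F has_derivative F') (at z)"
      using reg z unfolding slice_regular_stem_def C1_on_def F'_def
      by (simp add: frechet_derivative_works)
    have cr: "F' 1 + imult (F' \<i>) = 0" using reg z unfolding slice_regular_stem_def F'_def by blast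
    have linF: "linear F'" using bounded_linear.linear[OF has_derivative_bounded_linear[OF dF]] .
    have e: "L (F' h) = L (F' 1) * h" for h
    proof -
      have h: "Re h *\<^sub>R 1 + Im h *\<^sub>R \<i> = h" by (simp add: complex_eq_iff)
      have "F' (Re h *\<^sub>R 1 + Im h *\<^sub>R \<i>) = Re h *\<^sub>R F' 1 + Im h *\<^sub>R F' \<i>"
        by (simp add: linear_add[OF linF] linear_scale[OF linF])
      hence 1: "F' h = Re h *\<^sub>R F' 1 + Im h *\<^sub>R F' \<i>" using h by metis
      have 2: "fst (F' \<i>) = - snd (F' 1)" "snd (F' \<i>) = fst (F' 1)"
        using cr by (auto simp: imult_def prod_eq_iff eq_neg_iff_add_eq_0 add.commute)
      show ?thesis unfolding L_def 1
        by (simp add: complex_eq_iff inner_add_left 2 algebra_simps)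
    qed
    have "((\<lambda>z. L (F z)) has_derivative (\<lambda>h. L (F' h))) (at z)"
      using bounded_linear.has_derivative[OF blL dF] .
    moreover have "(\<lambda>h. L (F' h)) = (*) (L (F' 1))" by (rule ext, rule e)
    ultimately have "((\<lambda>z. L (F z)) has_field_derivative L (F' 1)) (at z)"
      unfolding has_field_derivative_def by simp
    thus "(\<lambda>z. Complex (fst (F z) \<bullet> b) (snd (F z) \<bullet> b)) field_differentiable at z within D"
      by (auto simp: L_def field_differentiable_def intro: has_field_derivative_at_within)
  qed
qed

lemma dir1:
  fixes cj :: "'a::{euclidean_space,times,one} \<Rightarrow> 'a" and D :: "complex set"
  assumes A: "alt_star_algebra cj" and J0: "J0 \<in> sphere_A cj"
    and Dc: "\<forall>z\<in>D. cnj z \<in> D"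
    and ns: "nonsingular_alg cj" and U1: "\<forall>U\<in>\<U>. slice_domain cj U"
    and U2: "Omega cj D = \<Union>\<U>"
  shows "SR_nonsingular cj D"
proof -
  interpret alg cj by (rule alg.intro) (rule A)
  have xz: "Re z *\<^sub>R 1 + Im z *\<^sub>R J0 \<in> Omega cj D" if "z \<in> D" for z
    using Omega_mem[of "Re z" "Im z" D J0 cj] that J0 by simp
  show "SR_nonsingular cj D" unfolding SR_nonsingular_def
  proof (intro allI impI)
    fix F :: "complex \<Rightarrow> 'a \<times> 'a"
    assume reg: "slice_regular_stem D F"
      and N0: "\<forall>x\<in>Omega cj D. induced cj D (stem_prod F (stem_conj cj F)) x = 0"
    have st: "F (cnj z) = (fst (F z), - snd (F z))" if "z \<in> D" for z
      using reg that unfolding slice_regular_stem_def stem_def by blast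
    have real0: "F r = 0" if r: "r \<in> D" "Im r = 0" for r
    proof -
      have "cnj r = r" using r by (simp add: complex_eq_iff)
      hence h: "snd (F r) = - snd (F r)" using st[OF r(1)] by (metis snd_conv)
      have "(2::real) *\<^sub>R snd (F r) = 0" by (metis h scaleR_2 right_minus)
      hence s0: "snd (F r) = 0" by simp
      define G where "G = stem_prod F (stem_conj cj F)"
      have G: "G r = (fst (F r) * cj (fst (F r)), 0)"
        using s0 by (simp add: G_def stem_prod_def stem_conj_def cmult_def)
      have cr: "Complex (Re r) 0 = r" using r by (simp add: complex_eq_iff)
      have xm: "Re r *\<^sub>R 1 + 0 *\<^sub>R J0 \<in> Omega cj D"
        using Omega_mem[of "Re r" 0 D J0 cj] r J0 cr by simp
      have "induced cj D G (Re r *\<^sub>R 1 + 0 *\<^sub>R J0) = fst (F r) * cj (fst (F r))"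
      proof (rule induced_prop[where P="\<lambda>y. y = fst (F r) * cj (fst (F r))", OF xm])
        fix \<alpha> \<beta> J assume J: "J \<in> sphere_A cj" "Complex \<alpha> \<beta> \<in> D"
          "Re r *\<^sub>R 1 + 0 *\<^sub>R J0 = \<alpha> *\<^sub>R 1 + \<beta> *\<^sub>R J"
        from rep[OF J0 J(1) J(3)] have "Re r = \<alpha>" "\<beta> = 0" by auto
        hence "Complex \<alpha> \<beta> = r" using r by (simp add: complex_eq_iff)
        thus "fst (G (Complex \<alpha> \<beta>)) + J * snd (G (Complex \<alpha> \<beta>)) = fst (F r) * cj (fst (F r))"
          using G by simp
      qed
      hence "fst (F r) * cj (fst (F r)) = 0" using N0 xm unfolding G_def by simp
      hence "fst (F r) = 0" using ns unfolding nonsingular_alg_def norm_A_def by blast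
      thus ?thesis using s0 by (simp add: prod_eq_iff)
    qed
    have allz: "F z = 0" if z: "z \<in> D" for z
    proof -
      obtain U where U: "U \<in> \<U>" "Re z *\<^sub>R 1 + Im z *\<^sub>R J0 \<in> U" using xz[OF z] U2 by blast
      obtain E where E: "open E" "connected E" "E \<inter> \<real> \<noteq> {}" "\<forall>z\<in>E. cnj z \<in> E" "U = Omega cj E"
        using U1 U(1) unfolding slice_domain_def by blast
      have zE: "z \<in> E"
      proof -
        from U(2) E(5) obtain \<alpha> \<beta> J where H: "Complex \<alpha> \<beta> \<in> E" "J \<in> sphere_A cj"
          "Re z *\<^sub>R 1 + Im z *\<^sub>R J0 = \<alpha> *\<^sub>R 1 + \<beta> *\<^sub>R J"
          unfolding Omega_def by blast
        from mem_conj[OF E(4) J0 H(2) H(3) H(1)] show ?thesis by simp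
      qed
      have ED: "E \<subseteq> D"
      proof
        fix w assume w: "w \<in> E"
        have "Re w *\<^sub>R 1 + Im w *\<^sub>R J0 \<in> Omega cj E"
          using Omega_mem[of "Re w" "Im w" E J0 cj] w J0 by simp
        hence "Re w *\<^sub>R 1 + Im w *\<^sub>R J0 \<in> Omega cj D"
          using U2 U(1) E(5) by blast
        then obtain \<alpha> \<beta> J where H: "Complex \<alpha> \<beta> \<in> D" "J \<in> sphere_A cj"
          "Re w *\<^sub>R 1 + Im w *\<^sub>R J0 = \<alpha> *\<^sub>R 1 + \<beta> *\<^sub>R J"
          unfolding Omega_def by blast
        from mem_conj[OF Dc J0 H(2) H(3) H(1)] show "w \<in> D" by simp
      qed
      obtain r where r: "r \<in> E" "Im r = 0" using E(3) by (auto simp: complex_is_Real_iff)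
      have lim: "r islimpt {w \<in> E. Im w = 0}"
      proof -
        obtain e where e: "e > 0" "ball r e \<subseteq> E" using E(1) r(1) open_contains_ball by blast
        show ?thesis unfolding islimpt_approachable
        proof (intro allI impI)
          fix d :: real assume d: "d > 0"
          let ?x = "r + of_real (min d e / 2)"
          have dd: "dist ?x r < e" "dist ?x r < d" using d e by (simp_all add: dist_norm)
          hence "?x \<in> E" using e by (auto simp: dist_commute)
          thus "\<exists>x'\<in>{w \<in> E. Im w = 0}. x' \<noteq> r \<and> dist x' r < d"
            using r d e dd by (intro bexI[of _ ?x]) auto
        qed
      qed
      have "\<forall>b\<in>Basis. fst (F z) \<bullet> b = 0 \<and> snd (F z) \<bullet> b = 0"
      proof
        fix b :: 'a assume b: "b \<in> Basis"
        let ?g = "\<lambda>z. Complex (fst (F z) \<bullet> b) (snd (F z) \<bullet> b)"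
        have hol: "?g holomorphic_on E" using holomorphic_on_subset[OF holo[OF reg] ED] .
        have g0: "?g w = 0" if "w \<in> {w \<in> E. Im w = 0}" for w
          using that real0 ED by (auto simp: complex_eq_iff)
        have "?g z = 0"
          by (rule analytic_continuation[OF hol E(1) E(2) _ r(1) lim g0 zE]) auto
        thus "fst (F z) \<bullet> b = 0 \<and> snd (F z) \<bullet> b = 0" by (simp add: complex_eq_iff)
      qed
      hence "fst (F z) = 0" "snd (F z) = 0"
        by (simp_all add: euclidean_eq_iff[where 'a='a])
      thus "F z = 0" by (simp add: prod_eq_iff)
    qed
    show "\<forall>x\<in>Omega cj D. induced cj D F x = 0"
    proof
      fix x assume x: "x \<in> Omega cj D"
      show "induced cj D F x = 0"
        by (rule induced_prop[where P="\<lambda>y. y = 0", OF x]) (simp add: allz)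
    qed
  qed
qed

lemma prod0:
  assumes A: "alt_star_algebra cj" and S: "SR_nonsingular cj D" and "slice_regular_stem D F"
    and "\<forall>z. stem_prod F (stem_conj cj F) z = 0"
  shows "\<forall>x\<in>Omega cj D. induced cj D F x = 0"
proof -
  interpret alg cj by (rule alg.intro) (rule A)
  have "\<forall>x\<in>Omega cj D. induced cj D (stem_prod F (stem_conj cj F)) x = 0"
  proof
    fix x assume x: "x \<in> Omega cj D"
    show "induced cj D (stem_prod F (stem_conj cj F)) x = 0"
      by (rule induced_prop[where P="\<lambda>y. y = 0", OF x]) (simp add: assms(4))
  qed
  thus ?thesis using S assms(3) unfolding SR_nonsingular_def by blast
qed

lemma dir2a:
  fixes cj :: "'a::{euclidean_space,times,one} \<Rightarrow> 'a" and D :: "complex set"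
  assumes A: "alt_star_algebra cj" and J0: "J0 \<in> sphere_A cj"
    and S: "SR_nonsingular cj D" and "D \<noteq> {}"
  shows "nonsingular_alg cj"
proof -
  interpret alg cj by (rule alg.intro) (rule A)
  have xz: "Re z *\<^sub>R 1 + Im z *\<^sub>R J0 \<in> Omega cj D" if "z \<in> D" for z
    using Omega_mem[of "Re z" "Im z" D J0 cj] that J0 by simp
  show ?thesis unfolding nonsingular_alg_def
  proof (intro allI impI)
    fix x0 assume n0: "norm_A cj x0 = 0"
    define F where "F = (\<lambda>z::complex. (x0, 0::'a))"
    have reg: "slice_regular_stem D F"
      by (rule sr_lc) (auto simp: F_def stem_def intro!: exI[of _ "1::real"])
    have "\<forall>z. stem_prod F (stem_conj cj F) z = 0" using n0
      by (simp add: F_def stem_prod_def stem_conj_def cmult_def norm_A_def zero_prod_def)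
    hence I0: "\<forall>x\<in>Omega cj D. induced cj D F x = 0" using prod0[OF A S reg] by blast
    obtain z where z: "z \<in> D" using assms(4) by blast
    have "induced cj D F (Re z *\<^sub>R 1 + Im z *\<^sub>R J0) = x0"
      by (rule induced_prop[where P="\<lambda>y. y = x0", OF xz[OF z]]) (simp add: F_def)
    thus "x0 = 0" using I0 xz[OF z] by simp
  qed
qed

lemma dir2b:
  fixes cj :: "'a::{euclidean_space,times,one} \<Rightarrow> 'a" and D :: "complex set"
  assumes A: "alt_star_algebra cj" and J0: "J0 \<in> sphere_A cj"
    and S: "SR_nonsingular cj D" and oD: "open D" and Dc: "\<forall>z\<in>D. cnj z \<in> D"
    and z: "z \<in> D"
  shows "connected_component_set D z \<inter> \<real> \<noteq> {}"
proof (rule ccontr)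
  interpret alg cj by (rule alg.intro) (rule A)
  have xz: "Re z *\<^sub>R 1 + Im z *\<^sub>R J0 \<in> Omega cj D" if "z \<in> D" for z
    using Omega_mem[of "Re z" "Im z" D J0 cj] that J0 by simp
  define C where "C = connected_component_set D z"
  assume "\<not> (connected_component_set D z \<inter> \<real> \<noteq> {})"
  hence CR: "\<forall>w\<in>C. Im w \<noteq> 0" by (auto simp: C_def complex_is_Real_iff)
  have oC: "open C" using open_connected_component[OF oD] C_def by simp
  have CD: "C \<subseteq> D" using connected_component_subset C_def by simp
  define S where "S = {w. w \<in> C \<or> cnj w \<in> C}"
  have SR: "Im w \<noteq> 0" if "w \<in> S" for w
  proof (cases "w \<in> C")
    case True thus ?thesis using CR by blast
  next
    case False hence "cnj w \<in> C" using that by (simp add: S_def)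
    hence "Im (cnj w) \<noteq> 0" using CR by blast
    thus ?thesis by simp
  qed
  have Sc: "cnj w \<in> S \<longleftrightarrow> w \<in> S" for w by (auto simp: S_def)
  define F where "F = (\<lambda>w. if w \<in> S then (1::'a, (- sgn (Im w)) *\<^sub>R J0) else (0, 0))"
  have stF: "stem D F" unfolding stem_def F_def using Sc by (auto simp: sgn_minus)
  have lcF: "\<forall>w\<in>D. \<exists>e>0. \<forall>v\<in>ball w e. F v = F w"
  proof
    fix w assume w: "w \<in> D"
    show "\<exists>e>0. \<forall>v\<in>ball w e. F v = F w"
    proof (cases "w \<in> S")
      case True
      have "\<exists>e1>0. ball w e1 \<subseteq> S"
      proof (cases "w \<in> C")
        case True
        then obtain e1 where "e1 > 0" "ball w e1 \<subseteq> C" using oC open_contains_ball by blast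
        then show ?thesis unfolding S_def by blast
      next
        case False
        with \<open>w\<in>S\<close> have "cnj w \<in> C" by (simp add: S_def)
        then obtain e1 where e1: "e1 > 0" "ball (cnj w) e1 \<subseteq> C" using oC open_contains_ball by blast
        moreover have "cnj v \<in> ball (cnj w) e1" if "v \<in> ball w e1" for v
          using that by (simp add: dist_norm flip: complex_cnj_diff)
        ultimately show ?thesis unfolding S_def by blast
      qed
      then obtain e1 where e1: "e1 > 0" "ball w e1 \<subseteq> S" by blast
      have iw: "Im w \<noteq> 0" using SR True by blast
      show ?thesis
      proof (intro exI[of _ "min e1 \<bar>Im w\<bar>"] conjI ballI)
        show "min e1 \<bar>Im w\<bar> > 0" using e1 iw by simp
        fix v assume v: "v \<in> ball w (min e1 \<bar>Im w\<bar>)"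
        hence vS: "v \<in> S" using e1 by auto
        have h: "\<bar>Im v - Im w\<bar> < \<bar>Im w\<bar>" using v abs_Im_le_cmod[of "v - w"]
          by (simp add: dist_norm norm_minus_commute)
        show "F v = F w"
        proof (cases "Im w > 0")
          case True
          hence "Im v > 0" using h by (simp add: abs_less_iff abs_of_pos)
          thus ?thesis using vS True \<open>w \<in> S\<close> by (simp add: F_def)
        next
          case False hence n: "Im w < 0" using iw by simp
          hence "Im v < 0" using h by (simp add: abs_less_iff abs_of_neg)
          thus ?thesis using vS n \<open>w \<in> S\<close> by (simp add: F_def)
        qed
      qed
    next
      case False
      define K where "K = connected_component_set D w"
      have oK: "open K" using open_connected_component[OF oD] K_def by simp
      have wK: "w \<in> K" using w K_def by simp
      obtain e where e: "e > 0" "ball w e \<subseteq> K" using oK wK open_contains_ball by blast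
      have KS: "v \<notin> S" if vK: "v \<in> K" for v
      proof
        assume "v \<in> S"
        then consider "v \<in> C" | "cnj v \<in> C" by (auto simp: S_def)
        then show False
        proof cases
          case 1
          have "K = connected_component_set D v"
            using connected_component_eq[of v D w] vK K_def by simp
          also have "\<dots> = C" using connected_component_eq[of v D z] 1 C_def by simp
          finally show False using wK False by (simp add: S_def)
        next
          case 2
          have KD: "K \<subseteq> D" using connected_component_subset K_def by simp
          have "cnj ` K \<subseteq> connected_component_set D (cnj v)"
          proof (rule connected_component_maximal)
            show "cnj v \<in> cnj ` K" using vK by blast
            show "connected (cnj ` K)" unfolding K_def
              by (rule connected_continuous_image) (intro continuous_intros, simp)
            show "cnj ` K \<subseteq> D" using KD Dc by blast
          qed
          also have "\<dots> = C" using connected_component_eq[of "cnj v" D z] 2 C_def by simp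
          finally have "cnj w \<in> C" using wK by blast
          thus False using False by (simp add: S_def)
        qed
      qed
      show ?thesis
      proof (intro exI[of _ e] conjI ballI)
        show "e > 0" by (rule e(1))
        fix v assume "v \<in> ball w e"
        hence "v \<notin> S" using e(2) KS by blast
        thus "F v = F w" using False by (simp add: F_def)
      qed
    qed
  qed
  have reg: "slice_regular_stem D F" using sr_lc[OF stF lcF] .
  have p0: "\<forall>w. stem_prod F (stem_conj cj F) w = 0"
  proof
    fix w
    show "stem_prod F (stem_conj cj F) w = 0"
    proof (cases "w \<in> S")
      case True
      have cJ: "cj J0 = - J0" using sph_cj[OF J0] .
      have sq: "J0 * J0 = - 1" using sph_sq[OF J0] .
      show ?thesis
      proof (cases "Im w > 0")
        case True
        thus ?thesis using \<open>w \<in> S\<close> cJ sq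
          by (simp add: F_def stem_prod_def stem_conj_def cmult_def zero_prod_def)
      next
        case False
        hence "Im w < 0" using SR[OF \<open>w \<in> S\<close>] by simp
        thus ?thesis using \<open>w \<in> S\<close> cJ sq
          by (simp add: F_def stem_prod_def stem_conj_def cmult_def zero_prod_def)
      qed
    next
      case False thus ?thesis
        by (simp add: F_def stem_prod_def stem_conj_def cmult_def zero_prod_def)
    qed
  qed
  have I0: "\<forall>x\<in>Omega cj D. induced cj D F x = 0" using prod0[OF A S reg p0] .
  have zC: "z \<in> C" using z by (simp add: C_def)
  define w where "w = Complex (Re z) \<bar>Im z\<bar>"
  have "w = z \<or> cnj w = z" by (simp add: w_def complex_eq_iff abs_if)
  hence wS: "w \<in> S" using zC by (auto simp: S_def)
  have wD: "w \<in> D"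
  proof (cases "w \<in> C")
    case True thus ?thesis using CD by blast
  next
    case False hence "cnj w \<in> D" using wS CD by (auto simp: S_def)
    thus ?thesis using Dc by (metis complex_cnj_cnj)
  qed
  have t: "Im w > 0" using SR[OF wS] by (simp add: w_def)
  have Sinv: "\<forall>z\<in>S. cnj z \<in> S" using Sc by blast
  have xm: "Re w *\<^sub>R 1 + Im w *\<^sub>R J0 \<in> Omega cj D" using xz[OF wD] .
  have "induced cj D F (Re w *\<^sub>R 1 + Im w *\<^sub>R J0) = 2 *\<^sub>R 1"
  proof (rule induced_prop[where P="\<lambda>y. y = 2 *\<^sub>R 1", OF xm])
    fix \<alpha> \<beta> J assume H: "J \<in> sphere_A cj" "Complex \<alpha> \<beta> \<in> D"
      "Re w *\<^sub>R 1 + Im w *\<^sub>R J0 = \<alpha> *\<^sub>R 1 + \<beta> *\<^sub>R J"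
    have "Complex (Re w) (Im w) \<in> S" using wS by simp
    hence mS: "Complex \<alpha> \<beta> \<in> S"
      using mem_conj[OF Sinv H(1) J0 H(3)[symmetric]] by simp
    from rep[OF J0 H(1) H(3)] have r1: "Im w *\<^sub>R J0 = \<beta> *\<^sub>R J" "Im w = \<beta> \<or> Im w = - \<beta>"
      by auto
    show "fst (F (Complex \<alpha> \<beta>)) + J * snd (F (Complex \<alpha> \<beta>)) = 2 *\<^sub>R 1"
      using r1(2)
    proof
      assume b: "Im w = \<beta>"
      hence "J = J0" using r1(1) t by simp
      thus ?thesis using mS b t sph_sq[OF J0] by (simp add: F_def scaleR_2)
    next
      assume b: "Im w = - \<beta>"
      hence "Im w *\<^sub>R J0 = Im w *\<^sub>R (- J)" using r1(1) by simp
      hence "J0 = - J" using t by (metis less_irrefl scaleR_cancel_left)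
      thus ?thesis using mS b t sph_sq[OF H(1)] by (simp add: F_def scaleR_2)
    qed
  qed
  thus False using I0 xm by simp
qed

theorem proposition4p14:
  fixes cj :: "'a::{euclidean_space,times,one} \<Rightarrow> 'a" and D :: "complex set"
  assumes "alt_star_algebra cj"
    and "sphere_A cj \<noteq> {}"
    and "open D" and "D \<noteq> {}" and "\<forall>z\<in>D. cnj z \<in> D"
    and "open (Omega cj D)"
  shows "SR_nonsingular cj D \<longleftrightarrow>
         nonsingular_alg cj \<and> (\<exists>\<U>. (\<forall>U\<in>\<U>. slice_domain cj U) \<and> Omega cj D = \<Union>\<U>)"
proof -
  obtain J0 where J0: "J0 \<in> sphere_A cj" using assms(2) by blast
  have Dc: "\<forall>z\<in>D. cnj z \<in> D" by (rule assms(5))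
  show ?thesis
  proof
    assume R: "nonsingular_alg cj \<and> (\<exists>\<U>. (\<forall>U\<in>\<U>. slice_domain cj U) \<and> Omega cj D = \<Union>\<U>)"
    then obtain \<U> where ns: "nonsingular_alg cj" and U1: "\<forall>U\<in>\<U>. slice_domain cj U"
      and U2: "Omega cj D = \<Union>\<U>" by blast
    show "SR_nonsingular cj D" by (rule dir1[OF assms(1) J0 Dc ns U1 U2])
  next
    assume S: "SR_nonsingular cj D"
    have ns: "nonsingular_alg cj" by (rule dir2a[OF assms(1) J0 S assms(4)])
    have comp: "connected_component_set D z \<inter> \<real> \<noteq> {}" if z: "z \<in> D" for z
      by (rule dir2b[OF assms(1) J0 S assms(3) Dc z])
    have Cconj: "\<forall>w\<in>connected_component_set D z. cnj w \<in> connected_component_set D z"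
      if z: "z \<in> D" for z
    proof -
      obtain r where r: "r \<in> connected_component_set D z" "r \<in> \<real>" using comp[OF z] by blast
      have cr: "cnj r = r" using r(2) by (simp add: complex_eq_iff complex_is_Real_iff)
      have "cnj ` connected_component_set D z \<subseteq> connected_component_set D r"
      proof (rule connected_component_maximal)
        show "r \<in> cnj ` connected_component_set D z" using r(1) cr by (metis image_eqI)
        show "connected (cnj ` connected_component_set D z)"
          by (rule connected_continuous_image) (intro continuous_intros, simp)
        show "cnj ` connected_component_set D z \<subseteq> D"
          using connected_component_subset[of D z] Dc by blast
      qed
      also have "\<dots> = connected_component_set D z" using connected_component_eq[OF r(1)] .
      finally show ?thesis by blast
    qed
    show "nonsingular_alg cj \<and> (\<exists>\<U>. (\<forall>U\<in>\<U>. slice_domain cj U) \<and> Omega cj D = \<Union>\<U>)"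
    proof (intro conjI exI[of _ "(\<lambda>z. Omega cj (connected_component_set D z)) ` D"])
      show "nonsingular_alg cj" by (rule ns)
      show "\<forall>U\<in>(\<lambda>z. Omega cj (connected_component_set D z)) ` D. slice_domain cj U"
      proof
        fix U assume "U \<in> (\<lambda>z. Omega cj (connected_component_set D z)) ` D"
        then obtain z where z: "z \<in> D" "U = Omega cj (connected_component_set D z)" by blast
        have o: "open (connected_component_set D z)" by (rule open_connected_component[OF assms(3)])
        show "slice_domain cj U" unfolding slice_domain_def
          by (rule exI[of _ "connected_component_set D z"], intro conjI)
            (rule o | rule connected_connected_component | rule comp[OF z(1)]
              | rule Cconj[OF z(1)] | rule z(2))+
      qed
      show "Omega cj D = \<Union> ((\<lambda>z. Omega cj (connected_component_set D z)) ` D)"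
      proof
        show "Omega cj D \<subseteq> \<Union> ((\<lambda>z. Omega cj (connected_component_set D z)) ` D)"
        proof
          fix x assume "x \<in> Omega cj D"
          then obtain \<alpha> \<beta> J where H: "Complex \<alpha> \<beta> \<in> D" "J \<in> sphere_A cj" "x = \<alpha> *\<^sub>R 1 + \<beta> *\<^sub>R J"
            unfolding Omega_def by blast
          hence "x \<in> Omega cj (connected_component_set D (Complex \<alpha> \<beta>))"
            using Omega_mem[of \<alpha> \<beta> "connected_component_set D (Complex \<alpha> \<beta>)" J cj] by simp
          thus "x \<in> \<Union> ((\<lambda>z. Omega cj (connected_component_set D z)) ` D)" using H(1) by blast
        qed
        show "\<Union> ((\<lambda>z. Omega cj (connected_component_set D z)) ` D) \<subseteq> Omega cj D"
        proof
          fix x assume "x \<in> \<Union> ((\<lambda>z. Omega cj (connected_component_set D z)) ` D)"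
          then obtain z where "z \<in> D" "x \<in> Omega cj (connected_component_set D z)" by blast
          then obtain \<alpha> \<beta> J where H: "Complex \<alpha> \<beta> \<in> connected_component_set D z"
            "J \<in> sphere_A cj" "x = \<alpha> *\<^sub>R 1 + \<beta> *\<^sub>R J"
            unfolding Omega_def by blast
          have "Complex \<alpha> \<beta> \<in> D" using H(1) connected_component_subset by blast
          from Omega_mem[OF this H(2)] show "x \<in> Omega cj D" using H(3) by simp
        qed
      qed
    qed
  qed
qed

end
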